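(* Let $\mathcal{X}\in\mathbb{R}^{n_1\times n_2\times n_3}$, let $q\in\mathbb{N}$, and let $\mathcal{B}\in\mathbb{R}^{n_2\times s\times n_3}$ (in the algorithm, a Gaussian random tensor). Form $$\mathcal{K}=[\mathcal{X}*\mathcal{B},\ (\mathcal{X}*\mathcal{X}^\top)*\mathcal{X}*\mathcal{B},\ \ldots,\ (\mathcal{X}*\mathcal{X}^\top)^{q}*\mathcal{X}*\mathcal{B}]$$ and let $\mathcal{Q}\in\mathbb{R}^{n_1\times m\times n_3}$ be the orthonormal factor of a T-QR factorization $\mathcal{K}=\mathcal{Q}*\mathcal{R}$, so that $\mathcal{Q}^\top*\mathcal{Q}=\mathcal{I}$. Put $\mathcal{P}_k=\mathcal{Q}*\mathcal{Q}^\top$ and $$\mathcal{Z}=[\mathcal{X},\ (\mathcal{X}*\mathcal{X}^\top)*\mathcal{X},\ \ldots,\ (\mathcal{X}*\mathcal{X}^\top)^{q}*\mathcal{X}]\in\mathbb{R}^{n_1\times n_2(q+1)\times n_3}.$$ Then $$\|(\mathcal{I}-\mathcal{Q}*\mathcal{Q}^\top)*\mathcal{X}\|_2\le \|(\mathcal{I}-\mathcal{P}_k)*\mathcal{Z}\|_2^{\frac{1}{2q+1}}.$$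
   Context: For a real third-order tensor $\mathcal{X}\in\mathbb{R}^{n_1\times n_2\times n_3}$ let $X^{(1)},\dots,X^{(n_3)}$ be its frontal slices ($X^{(k)}=\mathcal{X}(:,:,k)$). - $\mathtt{bcirc}(\mathcal{X})\in\mathbb{R}^{n_1n_3\times n_2n_3}$ is the block circulant matrix whose first block column is $X^{(1)},X^{(2)},\dots,X^{(n_3)}$, each subsequent block column being the cyclic downward shift of the previous one. - $\mathtt{unfold}(\mathcal{X})$ stacks the frontal slices vertically into an $n_1n_3\times n_2$ matrix, and $\mathtt{fold}$ is its inverse. - The T-product of $\mathcal{X}\in\mathbb{R}^{n_1\times n_2\times n_3}$ and $\mathcal{Y}\in\mathbb{R}^{n_2\times n_4\times n_3}$ is $\mathcal{X}*\mathcal{Y}=\mathtt{fold}(\mathtt{bcirc}(\mathcal{X})\,\mathtt{unfold}(\mathcal{Y}))\in\mathbb{R}^{n_1\times n_4\times n_3}$. - The transpose $\mathcal{X}^\top\in\mathbb{R}^{n_2\times n_1\times n_3}$ has frontal slices $(X^{(1)})^\top$ and, for $k=2,\dots,n_3$, $\mathcal{X}^\top(:,:,k)=(X^{(n_3+2-k)})^\top$. - The identity tensor $\mathcal{I}$ (of size $n\times n\times n_3$) has first frontal slice $I_n$ and all other frontal slices zero. Powers are $\mathcal{A}^j=\mathcal{A}*\cdots*\mathcal{A}$ ($j$ factors), with $\mathcal{A}^0=\mathcal{I}$. - The spectral norm is $\|\mathcal{X}\|_2=\|\mathtt{bcirc}(\mathcal{X})\|_2$. - $[\mathcal{A}_1,\ldots,\mathcal{A}_r]$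 denotes concatenation along the second mode: tensors with the same first and third dimensions have their frontal slices concatenated horizontally. - A T-QR factorization of $\mathcal{K}$ is computed by applying the fast Fourier transform along the third mode, taking a QR factorization of each frontal slice, and transforming back. It yields $\mathcal{K}=\mathcal{Q}*\mathcal{R}$ with $\mathcal{Q}^\top*\mathcal{Q}=\mathcal{I}$ and $\mathcal{R}$ having upper triangular frontal slices. *)

theory Defs
  imports "HOL-Analysis.Analysis"
begin

text \<open>Third-order real tensors are represented as functions of three 0-based indices
  (row i, column j, frontal slice k); their dimensions are carried explicitly.  Only entries within the index
  ranges are meaningful.\<close>

type_synonym tensor = "nat \<Rightarrow> nat \<Rightarrow> nat \<Rightarrow> real"
type_synonym rmat = "nat \<Rightarrow> nat \<Rightarrow> real"

text \<open>Block circulant matrix of an n1 x n2 x n3 tensor (size n1 n3 x n2 n3):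
  block (a,b) (0-based) is the frontal slice number (a - b) mod n3.\<close>
definition bcirc :: "nat \<Rightarrow> nat \<Rightarrow> nat \<Rightarrow> tensor \<Rightarrow> rmat" where
  "bcirc n1 n2 n3 X = (\<lambda>r c. if r < n1 * n3 \<and> c < n2 * n3
      then X (r mod n1) (c mod n2) ((r div n1 + n3 - c div n2) mod n3) else 0)"

text \<open>unfold: stack frontal slices vertically (n1 n3 x n2); fold is its inverse.\<close>
definition tunfold :: "nat \<Rightarrow> nat \<Rightarrow> tensor \<Rightarrow> rmat" where
  "tunfold n1 n3 X = (\<lambda>r c. X (r mod n1) c (r div n1))"

definition tfold :: "nat \<Rightarrow> nat \<Rightarrow> rmat \<Rightarrow> tensor" where
  "tfold n1 n3 M = (\<lambda>i j k. M (k * n1 + i) j)"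

definition mmul :: "nat \<Rightarrow> rmat \<Rightarrow> rmat \<Rightarrow> rmat" where
  "mmul n M N = (\<lambda>i j. \<Sum>l<n. M i l * N l j)"

definition tprod :: "nat \<Rightarrow> nat \<Rightarrow> nat \<Rightarrow> tensor \<Rightarrow> tensor \<Rightarrow> tensor" where
  "tprod n1 n2 n3 X Y = tfold n1 n3 (mmul (n2 * n3) (bcirc n1 n2 n3 X) (tunfold n2 n3 Y))"

definition ttrans :: "nat \<Rightarrow> tensor \<Rightarrow> tensor" where
  "ttrans n3 X = (\<lambda>i j k. X j i ((n3 - k) mod n3))"

definition tid :: "nat \<Rightarrow> tensor" where
  "tid n = (\<lambda>i j k. if i = j \<and> k = 0 then 1 else 0)"

definition tsub :: "tensor \<Rightarrow> tensor \<Rightarrow> tensor" where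
  "tsub X Y = (\<lambda>i j k. X i j k - Y i j k)"

definition tpow :: "nat \<Rightarrow> nat \<Rightarrow> tensor \<Rightarrow> nat \<Rightarrow> tensor" where
  "tpow n n3 A j = ((tprod n n n3 A) ^^ j) (tid n)"

text \<open>Concatenation along the second mode of a family A 0, A 1, ... of tensors,
  each having w columns; block number b occupies columns b w, ..., b w + w - 1.\<close>
definition tcat :: "nat \<Rightarrow> (nat \<Rightarrow> tensor) \<Rightarrow> tensor" where
  "tcat w A = (\<lambda>i j k. A (j div w) i (j mod w) k)"

definition teq :: "nat \<Rightarrow> nat \<Rightarrow> nat \<Rightarrow> tensor \<Rightarrow> tensor \<Rightarrow> bool" where
  "teq n1 n2 n3 X Y \<longleftrightarrow> (\<forall>i<n1. \<forall>j<n2. \<forall>k<n3. X i j k = Y i j k)"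

definition snorm :: "nat \<Rightarrow> nat \<Rightarrow> rmat \<Rightarrow> real" where
  "snorm m n M = (SUP x\<in>{x :: nat \<Rightarrow> real. (\<Sum>j<n. (x j)\<^sup>2) \<le> 1}.
      sqrt (\<Sum>i<m. (\<Sum>j<n. M i j * x j)\<^sup>2))"

definition tnorm :: "nat \<Rightarrow> nat \<Rightarrow> nat \<Rightarrow> tensor \<Rightarrow> real" where
  "tnorm n1 n2 n3 X = snorm (n1 * n3) (n2 * n3) (bcirc n1 n2 n3 X)"

end

theory Submission
  imports Defs
begin


lemma nat_mod_sub_int:
  fixes a b n :: nat
  assumes "b \<le> n" shows "int ((a + n - b) mod n) = (int a - int b) mod int n"
proof -
  have "int ((a + n - b) mod n) = (int a - int b + int n) mod int n"
    using assms by (simp add: of_nat_mod of_nat_diff algebra_simps)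
  also have "\<dots> = (int a - int b) mod int n" by (rule mod_add_self2)
  finally show ?thesis .
qed

lemma mod_ident1:
  fixes R C b n :: nat assumes "R < n" "C < n" "b < n"
  shows "((R + n - C) mod n + n - (b + n - C) mod n) mod n = (R + n - b) mod n"
proof -
  have n: "n > 0" using assms by auto
  have y: "(b + n - C) mod n \<le> n" using n by (simp add: less_imp_le)
  have "int (((R + n - C) mod n + n - (b + n - C) mod n) mod n)
      = (int ((R + n - C) mod n) - int ((b + n - C) mod n)) mod int n"
    by (rule nat_mod_sub_int[OF y])
  also have "\<dots> = ((int R - int C) mod int n - (int b - int C) mod int n) mod int n"
    using assms by (simp add: nat_mod_sub_int less_imp_le)
  also have "\<dots> = (int R - int b) mod int n" by (simp add: mod_simps)
  also have "\<dots> = int ((R + n - b) mod n)" using assms by (simp add: nat_mod_sub_int)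
  finally show ?thesis by linarith
qed

lemma mod_ident2:
  fixes a b n :: nat assumes "a < n" "b < n"
  shows "(n - (a + n - b) mod n) mod n = (b + n - a) mod n"
proof -
  have n: "n > 0" using assms by auto
  have y: "(a + n - b) mod n \<le> n" using n by (simp add: less_imp_le)
  have "int ((n - (a + n - b) mod n) mod n) = int ((0 + n - (a + n - b) mod n) mod n)" by simp
  also have "\<dots> = (0 - int ((a + n - b) mod n)) mod int n"
    using nat_mod_sub_int[OF y, of 0] by simp
  also have "\<dots> = (- ((int a - int b) mod int n)) mod int n"
    using assms by (simp add: nat_mod_sub_int less_imp_le)
  also have "\<dots> = (int b - int a) mod int n" by (simp add: mod_simps)
  also have "\<dots> = int ((b + n - a) mod n)" using assms by (simp add: nat_mod_sub_int)
  finally show ?thesis by linarith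
qed

lemma sum_rot:
  fixes n C :: nat assumes "0 < n"
  shows "(\<Sum>b<n. g ((b + C) mod n)) = (\<Sum>b<n. (g b :: real))"
proof -
  have inj: "inj_on (\<lambda>b. (b + C) mod n) {..<n}"
  proof
    fix x y
    assume a: "x \<in> {..<n}" "y \<in> {..<n}" and h: "(x + C) mod n = (y + C) mod n"
    have h': "(int x + int C) mod int n = (int y + int C) mod int n"
      using arg_cong[OF h, of int] by (simp add: zmod_int)
    have "int x mod int n = ((int x + int C) mod int n - int C) mod int n" by (simp add: mod_diff_left_eq)
    also have "\<dots> = ((int y + int C) mod int n - int C) mod int n" using h' by simp
    also have "\<dots> = int y mod int n" by (simp add: mod_diff_left_eq)
    finally have "int x mod int n = int y mod int n" .
    then show "x = y" using a by simp
  qed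
  have img: "(\<lambda>b. (b + C) mod n) ` {..<n} = {..<n}"
    by (rule endo_inj_surj) (use inj assms in auto)
  have "bij_betw (\<lambda>b. (b + C) mod n) {..<n} {..<n}" using inj img by (simp add: bij_betw_def)
  then show ?thesis by (rule sum.reindex_bij_betw)
qed

lemma sum_split:
  "(\<Sum>l<n3*n2. (f :: nat \<Rightarrow> real) l) = (\<Sum>b<n3. \<Sum>j<n2. f (b*n2+j))"
proof -
  have "(\<Sum>l<n3*n2. f l) = (\<Sum>b<n3. sum f {b*n2..<b*n2+n2})"
    using sum.nat_group[of f n2 n3] by simp
  also have "\<dots> = (\<Sum>b<n3. \<Sum>j<n2. f (b*n2+j))"
  proof (rule sum.cong[OF refl])
    fix b
    show "sum f {b*n2..<b*n2+n2} = (\<Sum>j<n2. f (b*n2+j))"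
      using sum.shift_bounds_nat_ivl[of f 0 "b*n2" n2]
      by (simp add: add.commute lessThan_atLeast0)
  qed
  finally show ?thesis .
qed




lemma bcirc_in:
  "r < n1*n3 \<Longrightarrow> c < n2*n3 \<Longrightarrow> bcirc n1 n2 n3 X r c = X (r mod n1) (c mod n2) ((r div n1 + n3 - c div n2) mod n3)"
  by (simp add: bcirc_def)

lemma bcirc_out:
  "\<not> (r < n1*n3 \<and> c < n2*n3) \<Longrightarrow> bcirc n1 n2 n3 X r c = 0"
  unfolding bcirc_def by auto

lemma idx_lt: "b < n3 \<Longrightarrow> j < (n2::nat) \<Longrightarrow> b*n2 + j < n2*n3"
proof -
  assume "b < n3" "j < n2"
  then have "b*n2 + j < b*n2 + n2" by simp
  also have "\<dots> = (b+1)*n2" by simp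
  also have "\<dots> \<le> n3*n2" using \<open>b < n3\<close> by (intro mult_right_mono) auto
  finally show ?thesis by (simp add: mult.commute)
qed

lemma bcirc_tprod:
  assumes "0 < n1" "0 < n2" "0 < n3"
  shows "bcirc n1 n4 n3 (tprod n1 n2 n3 A B) = mmul (n2*n3) (bcirc n1 n2 n3 A) (bcirc n2 n4 n3 B)"
proof (intro ext)
  fix r c
  show "bcirc n1 n4 n3 (tprod n1 n2 n3 A B) r c = mmul (n2*n3) (bcirc n1 n2 n3 A) (bcirc n2 n4 n3 B) r c"
  proof (cases "r < n1*n3 \<and> c < n4*n3")
    case False
    then have z: "\<And>l. bcirc n1 n2 n3 A r l * bcirc n2 n4 n3 B l c = 0" by (auto simp: bcirc_out)
    have "mmul (n2*n3) (bcirc n1 n2 n3 A) (bcirc n2 n4 n3 B) r c = 0" unfolding mmul_def by (subst z) simp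
    then show ?thesis using False by (simp add: bcirc_out)
  next
    case True
    define i where "i = r mod n1"
    define R where "R = r div n1"
    define j' where "j' = c mod n4"
    define C where "C = c div n4"
    define K where "K = (R + n3 - C) mod n3"
    have R: "R < n3" using True unfolding R_def by (simp add: less_mult_imp_div_less mult.commute)
    have C: "C < n3" using True unfolding C_def by (simp add: less_mult_imp_div_less mult.commute)
    have i: "i < n1" using assms unfolding i_def by simp
    have K: "K < n3" using assms unfolding K_def by simp
    have Ki: "K*n1 + i < n1*n3" using idx_lt[OF K i] .
    have Kmod: "(K*n1 + i) mod n1 = i" "(K*n1 + i) div n1 = K" using i by auto
    have "bcirc n1 n4 n3 (tprod n1 n2 n3 A B) r c = tprod n1 n2 n3 A B i j' K"
      using True by (simp add: bcirc_def i_def R_def j'_def C_def K_def)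
    also have "\<dots> = (\<Sum>l<n2*n3. bcirc n1 n2 n3 A (K*n1+i) l * B (l mod n2) j' (l div n2))"
      by (simp add: tprod_def tfold_def mmul_def tunfold_def)
    also have "\<dots> = (\<Sum>b<n3. \<Sum>j<n2. A i j ((K + n3 - b) mod n3) * B j j' b)"
      unfolding mult.commute[of n2 n3] sum_split
    proof (intro sum.cong refl)
      fix b j assume "b \<in> {..<n3}" "j \<in> {..<n2}"
      then have "b < n3" "j < n2" by auto
      then show "bcirc n1 n2 n3 A (K*n1+i) (b*n2+j) * B ((b*n2+j) mod n2) j' ((b*n2+j) div n2)
          = A i j ((K + n3 - b) mod n3) * B j j' b"
        using Ki Kmod idx_lt[of b n3 j n2] by (simp add: bcirc_in mult.commute)
    qed
    also have "\<dots> = (\<Sum>b<n3. \<Sum>j<n2. A i j ((K + n3 - (b + (n3 - C)) mod n3) mod n3) * B j j' ((b + (n3 - C)) mod n3))"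
      using sum_rot[OF assms(3), of "\<lambda>b. \<Sum>j<n2. A i j ((K + n3 - b) mod n3) * B j j' b" "n3 - C"]
      by simp
    also have "\<dots> = (\<Sum>b<n3. \<Sum>j<n2. A i j ((R + n3 - b) mod n3) * B j j' ((b + n3 - C) mod n3))"
    proof (intro sum.cong refl)
      fix b j assume "b \<in> {..<n3}"
      then have b: "b < n3" by auto
      have e: "b + (n3 - C) = b + n3 - C" using C by simp
      show "A i j ((K + n3 - (b + (n3 - C)) mod n3) mod n3) * B j j' ((b + (n3 - C)) mod n3)
         = A i j ((R + n3 - b) mod n3) * B j j' ((b + n3 - C) mod n3)"
        unfolding e K_def using mod_ident1[OF R C b] by simp
    qed
    also have "\<dots> = mmul (n2*n3) (bcirc n1 n2 n3 A) (bcirc n2 n4 n3 B) r c"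
      unfolding mmul_def mult.commute[of n2 n3] sum_split
    proof (intro sum.cong refl)
      fix b j assume "b \<in> {..<n3}" "j \<in> {..<n2}"
      then have "b < n3" "j < n2" by auto
      then show "A i j ((R + n3 - b) mod n3) * B j j' ((b + n3 - C) mod n3)
         = bcirc n1 n2 n3 A r (b*n2+j) * bcirc n2 n4 n3 B (b*n2+j) c"
        using True idx_lt[of b n3 j n2] by (simp add: bcirc_in i_def R_def j'_def C_def mult.commute)
    qed
    finally show ?thesis .
  qed
qed




definition Idm :: "nat \<Rightarrow> rmat" where
  "Idm N = (\<lambda>r c. if r < N \<and> c < N \<and> r = c then 1 else 0)"

definition tr :: "rmat \<Rightarrow> rmat" where
  "tr M = (\<lambda>r c. M c r)"

lemma bcirc_ttrans:
  assumes "0 < n3"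
  shows "bcirc n2 n1 n3 (ttrans n3 X) = tr (bcirc n1 n2 n3 X)"
proof (intro ext)
  fix r c
  show "bcirc n2 n1 n3 (ttrans n3 X) r c = tr (bcirc n1 n2 n3 X) r c"
  proof (cases "r < n2*n3 \<and> c < n1*n3")
    case False
    then show ?thesis by (auto simp: tr_def bcirc_out)
  next
    case True
    have a: "r div n2 < n3" using True by (simp add: less_mult_imp_div_less mult.commute)
    have b: "c div n1 < n3" using True by (simp add: less_mult_imp_div_less mult.commute)
    show ?thesis using True mod_ident2[OF a b]
      by (simp add: tr_def bcirc_in ttrans_def)
  qed
qed

lemma mod_zero_eq:
  fixes a b n :: nat
  assumes "a < n" "b < n" "(a + n - b) mod n = 0" shows "a = b"
proof (cases "b \<le> a")
  case True
  then have "a + n - b = (a - b) + n" by simp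
  then have "(a - b) mod n = 0" using assms(3) by simp
  then show ?thesis using assms True by simp
next
  case False
  then have "a + n - b < n" "0 < a + n - b" using assms by auto
  then show ?thesis using assms(3) by simp
qed

lemma bcirc_tid:
  assumes "0 < n" "0 < n3"
  shows "bcirc n n n3 (tid n) = Idm (n*n3)"
proof (intro ext)
  fix r c
  show "bcirc n n n3 (tid n) r c = Idm (n*n3) r c"
  proof (cases "r < n*n3 \<and> c < n*n3")
    case False
    then show ?thesis by (auto simp: Idm_def bcirc_out)
  next
    case True
    have a: "r div n < n3" using True by (simp add: less_mult_imp_div_less mult.commute)
    have b: "c div n < n3" using True by (simp add: less_mult_imp_div_less mult.commute)
    have "(r mod n = c mod n \<and> (r div n + n3 - c div n) mod n3 = 0) \<longleftrightarrow> r = c"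
    proof
      assume h: "r mod n = c mod n \<and> (r div n + n3 - c div n) mod n3 = 0"
      then have "r div n = c div n" using mod_zero_eq[OF a b] by simp
      with h show "r = c" by (metis div_mult_mod_eq)
    qed simp
    then show ?thesis using True by (simp add: bcirc_in tid_def Idm_def)
  qed
qed

lemma bcirc_tsub:
  "bcirc n1 n2 n3 (tsub A B) = (\<lambda>r c. bcirc n1 n2 n3 A r c - bcirc n1 n2 n3 B r c)"
  by (intro ext) (simp add: bcirc_def tsub_def)

lemma bcirc_teq:
  assumes "teq n1 n2 n3 X Y"
  shows "bcirc n1 n2 n3 X = bcirc n1 n2 n3 Y"
proof (intro ext)
  fix r c
  show "bcirc n1 n2 n3 X r c = bcirc n1 n2 n3 Y r c"
  proof (cases "r < n1*n3 \<and> c < n2*n3")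
    case False
    then show ?thesis by (simp add: bcirc_out)
  next
    case True
    then have "0 < n1" "0 < n2" "0 < n3" by (auto intro: gr0I)
    then show ?thesis using True assms by (simp add: bcirc_in teq_def)
  qed
qed

lemma tpow_Suc: "tpow n n3 A (Suc j) = tprod n n n3 A (tpow n n3 A j)"
  by (simp add: tpow_def)

lemma tpow_0: "tpow n n3 A 0 = tid n"
  by (simp add: tpow_def)

lemma bcirc_tcat:
  fixes n1 n2 n3 q :: nat
  assumes "0 < n2" "r < n1*n3" "c < n2*n3"
  shows "bcirc n1 (n2*(q+1)) n3 (tcat n2 F) r (c div n2 * (n2*(q+1)) + (q*n2 + c mod n2))
       = bcirc n1 n2 n3 (F q) r c"
proof -
  define w where "w = n2*(q+1)"
  have b: "c div n2 < n3" using assms by (simp add: less_mult_imp_div_less mult.commute)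
  have j: "q*n2 + c mod n2 < w" unfolding w_def using assms by (simp add: algebra_simps)
  have lt: "c div n2 * w + (q*n2 + c mod n2) < w * n3" using idx_lt[OF b j] .
  have m: "(c div n2 * w + (q*n2 + c mod n2)) mod w = q*n2 + c mod n2"
    "(c div n2 * w + (q*n2 + c mod n2)) div w = c div n2" using j by auto
  have m2: "(q*n2 + c mod n2) mod n2 = c mod n2" "(q*n2 + c mod n2) div n2 = q" using assms by auto
  show ?thesis using assms lt m m2 unfolding w_def[symmetric]
    by (simp add: bcirc_in tcat_def mult.commute)
qed




definition mv :: "nat \<Rightarrow> rmat \<Rightarrow> (nat \<Rightarrow> real) \<Rightarrow> nat \<Rightarrow> real" where
  "mv n M x = (\<lambda>i. \<Sum>j<n. M i j * x j)"

definition ip :: "nat \<Rightarrow> (nat \<Rightarrow> real) \<Rightarrow> (nat \<Rightarrow> real) \<Rightarrow> real" where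
  "ip n x y = (\<Sum>i<n. x i * y i)"

lemma mv_mmul: "mv n (mmul k A B) x = mv k A (mv n B x)"
proof (intro ext)
  fix i
  have "mv n (mmul k A B) x i = (\<Sum>j<n. \<Sum>l<k. A i l * (B l j * x j))"
    by (simp add: mv_def mmul_def sum_distrib_right mult.assoc)
  also have "\<dots> = (\<Sum>l<k. \<Sum>j<n. A i l * (B l j * x j))" by (rule sum.swap)
  also have "\<dots> = mv k A (mv n B x) i" by (simp add: mv_def sum_distrib_left)
  finally show "mv n (mmul k A B) x i = mv k A (mv n B x) i" .
qed

lemma ip_adj: "ip m (mv n M x) y = ip n x (mv m (tr M) y)"
proof -
  have "ip m (mv n M x) y = (\<Sum>i<m. \<Sum>j<n. x j * (M i j * y i))"
    unfolding ip_def mv_def sum_distrib_right by (intro sum.cong refl) (simp add: mult_ac)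
  also have "\<dots> = (\<Sum>j<n. \<Sum>i<m. x j * (M i j * y i))" by (rule sum.swap)
  also have "\<dots> = ip n x (mv m (tr M) y)" by (simp add: ip_def mv_def tr_def sum_distrib_left)
  finally show ?thesis .
qed

lemma ip_cong: "(\<And>i. i < n \<Longrightarrow> x i = x' i) \<Longrightarrow> (\<And>i. i < n \<Longrightarrow> y i = y' i) \<Longrightarrow> ip n x y = ip n x' y'"
  unfolding ip_def by (intro sum.cong) auto

lemma mv_cong: "(\<And>j. j < n \<Longrightarrow> x j = x' j) \<Longrightarrow> mv n M x = mv n M x'"
  unfolding mv_def by (intro ext sum.cong) auto

lemma ip_sym: "ip n x y = ip n y x"
  unfolding ip_def by (simp add: mult.commute)

lemma ip_cs: "(ip n x y)\<^sup>2 \<le> ip n x x * ip n y y"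
  using Cauchy_Schwarz_ineq_sum[of x y "{..<n}"] by (simp add: ip_def power2_eq_square)

lemma ip_nonneg: "0 \<le> ip n x x"
  unfolding ip_def by (intro sum_nonneg) simp

lemma ip_cs2: "ip n x y \<le> sqrt (ip n x x) * sqrt (ip n y y)"
proof -
  have "ip n x y \<le> \<bar>ip n x y\<bar>" by simp
  also have "\<dots> = sqrt ((ip n x y)\<^sup>2)" by simp
  also have "\<dots> \<le> sqrt (ip n x x * ip n y y)" using ip_cs by (rule real_sqrt_le_mono)
  also have "\<dots> = sqrt (ip n x x) * sqrt (ip n y y)" by (simp add: real_sqrt_mult)
  finally show ?thesis .
qed

lemma mv_Idm: "i < N \<Longrightarrow> mv N (Idm N) x i = x i"
proof -
  assume i: "i < N"
  have "mv N (Idm N) x i = (\<Sum>j<N. if i = j then x j else 0)"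
    unfolding mv_def Idm_def using i by (intro sum.cong) auto
  also have "\<dots> = x i" using i by simp
  finally show ?thesis .
qed

lemma snorm_alt: "snorm m n M = (SUP x\<in>{x. ip n x x \<le> 1}. sqrt (ip m (mv n M x) (mv n M x)))"
  by (simp add: snorm_def ip_def mv_def power2_eq_square)

lemma ip_mv_bound:
  assumes "ip n x x \<le> 1"
  shows "ip m (mv n M x) (mv n M x) \<le> (\<Sum>i<m. \<Sum>j<n. (M i j)\<^sup>2)"
proof -
  have "ip m (mv n M x) (mv n M x) = (\<Sum>i<m. (\<Sum>j<n. M i j * x j)\<^sup>2)"
    by (simp add: ip_def mv_def power2_eq_square)
  also have "\<dots> \<le> (\<Sum>i<m. \<Sum>j<n. (M i j)\<^sup>2)"
  proof (intro sum_mono)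
    fix i
    have "(\<Sum>j<n. M i j * x j)\<^sup>2 \<le> (\<Sum>j<n. (M i j)\<^sup>2) * (\<Sum>j<n. (x j)\<^sup>2)"
      by (rule Cauchy_Schwarz_ineq_sum)
    also have "\<dots> \<le> (\<Sum>j<n. (M i j)\<^sup>2) * 1"
      using assms by (intro mult_left_mono) (auto simp: ip_def power2_eq_square intro: sum_nonneg)
    finally show "(\<Sum>j<n. M i j * x j)\<^sup>2 \<le> (\<Sum>j<n. (M i j)\<^sup>2)" by simp
  qed
  finally show ?thesis .
qed

lemma snorm_bdd: "bdd_above ((\<lambda>x. sqrt (ip m (mv n M x) (mv n M x))) ` {x. ip n x x \<le> 1})"
  by (rule bdd_aboveI2[where M = "sqrt (\<Sum>i<m. \<Sum>j<n. (M i j)\<^sup>2)"])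
     (auto intro: real_sqrt_le_mono ip_mv_bound)

lemma snorm_upper: "ip n x x \<le> 1 \<Longrightarrow> sqrt (ip m (mv n M x) (mv n M x)) \<le> snorm m n M"
  unfolding snorm_alt by (rule cSUP_upper[OF _ snorm_bdd]) simp

lemma snorm_least:
  assumes "\<And>x. ip n x x \<le> 1 \<Longrightarrow> sqrt (ip m (mv n M x) (mv n M x)) \<le> c"
  shows "snorm m n M \<le> c"
proof -
  have "(\<lambda>_. 0) \<in> {x. ip n x x \<le> (1::real)}" by (simp add: ip_def)
  then show ?thesis unfolding snorm_alt by (intro cSUP_least) (use assms in auto)
qed

lemma snorm_nonneg: "0 \<le> snorm m n M"
proof -
  have "sqrt (ip m (mv n M (\<lambda>_. 0)) (mv n M (\<lambda>_. 0))) \<le> snorm m n M"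
    by (rule snorm_upper) (simp add: ip_def)
  then show ?thesis by (simp add: ip_def mv_def)
qed

lemma snorm_scale:
  "sqrt (ip m (mv n M x) (mv n M x)) \<le> snorm m n M * sqrt (ip n x x)"
proof (cases "ip n x x = 0")
  case True
  then have "\<forall>j\<in>{..<n}. x j * x j = 0"
    unfolding ip_def by (subst sum_nonneg_eq_0_iff[symmetric]) auto
  then have "mv n M x = (\<lambda>_. 0)" by (auto simp: mv_def)
  then show ?thesis using True by (simp add: ip_def)
next
  case False
  define t where "t = sqrt (ip n x x)"
  have t: "t > 0" using False ip_nonneg[of n x] unfolding t_def by simp
  have t2: "t * t = ip n x x" unfolding t_def using ip_nonneg[of n x] by simp
  define y where "y = (\<lambda>j. x j / t)"
  have "ip n y y = ip n x x / (t * t)"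
    by (simp add: ip_def y_def sum_divide_distrib)
  then have "ip n y y = 1" using t2 False by simp
  then have h: "sqrt (ip m (mv n M y) (mv n M y)) \<le> snorm m n M" using snorm_upper[of n y] by simp
  have "mv n M y = (\<lambda>i. mv n M x i / t)" by (simp add: mv_def y_def sum_divide_distrib)
  then have "ip m (mv n M y) (mv n M y) = ip m (mv n M x) (mv n M x) / (t * t)"
    by (simp add: ip_def sum_divide_distrib)
  then have "sqrt (ip m (mv n M y) (mv n M y)) = sqrt (ip m (mv n M x) (mv n M x)) / t"
    using t by (simp add: real_sqrt_divide real_sqrt_mult)
  with h have "sqrt (ip m (mv n M x) (mv n M x)) / t \<le> snorm m n M" by simp
  then show ?thesis using t unfolding t_def[symmetric] by (simp add: divide_le_eq mult.commute)
qed

lemma snorm_cols: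
  fixes g :: "nat \<Rightarrow> nat"
  assumes inj: "inj_on g {..<n}" and rng: "g ` {..<n} \<subseteq> {..<n'}"
      and eq: "\<And>r c. r < m \<Longrightarrow> c < n \<Longrightarrow> A r c = B r (g c)"
  shows "snorm m n A \<le> snorm m n' B"
proof (rule snorm_least)
  fix x assume x: "ip n x x \<le> 1"
  define G where "G = g ` {..<n}"
  define x' where "x' = (\<lambda>c'. if c' \<in> G then x (the_inv_into {..<n} g c') else 0)"
  have sumG: "(\<Sum>c'<n'. f c' * x' c') = (\<Sum>c<n. f (g c) * x c)" for f :: "nat \<Rightarrow> real"
  proof -
    have "(\<Sum>c'<n'. f c' * x' c') = (\<Sum>c'<n'. if c' \<in> G then f c' * x (the_inv_into {..<n} g c') else 0)"
      unfolding x'_def by (intro sum.cong) auto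
    also have "\<dots> = (\<Sum>c'\<in>{..<n'} \<inter> G. f c' * x (the_inv_into {..<n} g c'))"
      by (rule sum.inter_restrict[symmetric]) simp
    also have "{..<n'} \<inter> G = G" using rng G_def by auto
    also have "(\<Sum>c'\<in>G. f c' * x (the_inv_into {..<n} g c')) = (\<Sum>c<n. f (g c) * x (the_inv_into {..<n} g (g c)))"
      unfolding G_def by (subst sum.reindex[OF inj]) simp
    also have "\<dots> = (\<Sum>c<n. f (g c) * x c)"
      by (intro sum.cong) (auto simp: the_inv_into_f_f[OF inj])
    finally show ?thesis .
  qed
  have xg: "\<And>c. c < n \<Longrightarrow> x' (g c) = x c"
    by (simp add: x'_def G_def the_inv_into_f_f[OF inj])
  have "ip n' x' x' = (\<Sum>c<n. x' (g c) * x c)" unfolding ip_def by (rule sumG)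
  also have "\<dots> = ip n x x" unfolding ip_def by (intro sum.cong) (auto simp: xg)
  finally have "ip n' x' x' = ip n x x" .
  then have x': "ip n' x' x' \<le> 1" using x by simp
  have "\<And>r. r < m \<Longrightarrow> mv n' B x' r = mv n A x r"
    unfolding mv_def using sumG eq by simp
  then have "ip m (mv n A x) (mv n A x) = ip m (mv n' B x') (mv n' B x')"
    by (intro ip_cong) auto
  then show "sqrt (ip m (mv n A x) (mv n A x)) \<le> snorm m n' B"
    using snorm_upper[OF x'] by simp
qed




lemma mv_sub: "mv n (\<lambda>r c. A r c - B r c) x = (\<lambda>i. mv n A x i - mv n B x i)"
  by (simp add: mv_def left_diff_distrib sum_subtractf)

lemma mv_diff: "mv n M (\<lambda>j. a j - b j) = (\<lambda>i. mv n M a i - mv n M b i)"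
  by (simp add: mv_def right_diff_distrib sum_subtractf)

lemma mv_zero: "mv n M (\<lambda>_. 0) = (\<lambda>_. 0)"
  by (simp add: mv_def)

lemma tr_tr: "tr (tr M) = M"
  by (simp add: tr_def)

lemma ip_adj2: "ip N2 (mv N1 (tr M) a) b = ip N1 a (mv N2 M b)"
  using ip_adj[of N2 N1 "tr M" a b] by (simp add: tr_tr)

fun wseq :: "nat \<Rightarrow> nat \<Rightarrow> rmat \<Rightarrow> (nat \<Rightarrow> real) \<Rightarrow> nat \<Rightarrow> (nat \<Rightarrow> real)" where
  "wseq N1 N2 M w 0 = w"
| "wseq N1 N2 M w (Suc j) = (if even j then mv N1 (tr M) (wseq N1 N2 M w j) else mv N2 M (wseq N1 N2 M w j))"

lemma logconv_aux:
  fixes m :: "nat \<Rightarrow> real"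
  assumes nn: "\<And>j. 0 \<le> m j" and lc: "\<And>j. (m (Suc j))\<^sup>2 \<le> m j * m (Suc (Suc j))"
  shows "m 1 * m j \<le> m 0 * m (Suc j)"
proof (induction j)
  case 0
  then show ?case by (simp add: mult.commute)
next
  case (Suc j)
  show ?case
  proof (cases "m j = 0")
    case True
    then have "(m (Suc j))\<^sup>2 \<le> 0" using lc[of j] by simp
    then have "m (Suc j) = 0" by simp
    then show ?thesis using nn by simp
  next
    case False
    then have pos: "m j > 0" using nn[of j] by simp
    have "m j * (m 1 * m (Suc j)) = (m 1 * m j) * m (Suc j)" by (simp add: mult_ac)
    also have "\<dots> \<le> (m 0 * m (Suc j)) * m (Suc j)" using Suc.IH nn by (intro mult_right_mono) auto
    also have "\<dots> = m 0 * (m (Suc j))\<^sup>2" by (simp add: power2_eq_square mult_ac)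
    also have "\<dots> \<le> m 0 * (m j * m (Suc (Suc j)))" using lc nn by (intro mult_left_mono) auto
    also have "\<dots> = m j * (m 0 * m (Suc (Suc j)))" by (simp add: mult_ac)
    finally show ?thesis using pos by simp
  qed
qed

lemma logconv:
  fixes m :: "nat \<Rightarrow> real"
  assumes nn: "\<And>j. 0 \<le> m j" and lc: "\<And>j. (m (Suc j))\<^sup>2 \<le> m j * m (Suc (Suc j))"
  shows "m 1 ^ j * m 0 \<le> m 0 ^ j * m j"
proof (induction j)
  case 0
  then show ?case by simp
next
  case (Suc j)
  have "m 1 ^ Suc j * m 0 = m 1 * (m 1 ^ j * m 0)" by simp
  also have "\<dots> \<le> m 1 * (m 0 ^ j * m j)" using Suc.IH nn by (intro mult_left_mono) auto
  also have "\<dots> = m 0 ^ j * (m 1 * m j)" by (simp add: mult_ac)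
  also have "\<dots> \<le> m 0 ^ j * (m 0 * m (Suc j))"
    using logconv_aux[of m j, OF nn lc] nn by (intro mult_left_mono) auto
  also have "\<dots> = m 0 ^ Suc j * m (Suc j)" by simp
  finally show ?case .
qed




lemma main_matrix:
  fixes N1 N2 Nm q :: nat and M V :: rmat and Ap :: "nat \<Rightarrow> rmat" and E :: rmat
  assumes orth: "mmul N1 (tr V) V = Idm Nm"
    and Ap0: "Ap 0 = Idm N1"
    and ApS: "\<And>j. Ap (Suc j) = mmul N1 (mmul N2 M (tr M)) (Ap j)"
    and E_def: "E = (\<lambda>r c. Idm N1 r c - mmul Nm V (tr V) r c)"
  shows "snorm N1 N2 (mmul N1 E M)
     \<le> snorm N1 N2 (mmul N1 E (mmul N1 (Ap q) M)) powr (1 / (2 * real q + 1))"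
proof -
  define c0 where "c0 = snorm N1 N2 (mmul N1 E (mmul N1 (Ap q) M))"
  define k where "k = Suc (2*q)"
  have c0nn: "0 \<le> c0" unfolding c0_def by (rule snorm_nonneg)
  have kreal: "real k = 2 * real q + 1" unfolding k_def by simp
  define Aop where "Aop = (\<lambda>x. mv N2 M (mv N1 (tr M) x))"
  have Ev: "mv N1 E x i = x i - mv Nm V (mv N1 (tr V) x) i" if "i < N1" for x i
    using that unfolding E_def mv_sub by (simp add: mv_Idm mv_mmul)
  have VtV: "mv N1 (tr V) (mv Nm V y) l = y l" if "l < Nm" for y l
    using that by (simp add: mv_mmul[symmetric] orth mv_Idm)
  have idem: "mv N1 E (mv N1 E x) i = mv N1 E x i" if "i < N1" for x i
  proof -
    define z where "z = mv N1 E x"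
    have "mv N1 (tr V) z = mv N1 (tr V) (\<lambda>i. x i - mv Nm V (mv N1 (tr V) x) i)"
      unfolding z_def by (rule mv_cong) (simp add: Ev)
    also have "\<dots> = (\<lambda>l. mv N1 (tr V) x l - mv N1 (tr V) (mv Nm V (mv N1 (tr V) x)) l)"
      by (rule mv_diff)
    finally have "\<And>l. l < Nm \<Longrightarrow> mv N1 (tr V) z l = 0" by (simp add: VtV)
    then have "mv Nm V (mv N1 (tr V) z) = mv Nm V (\<lambda>_. 0)" by (intro mv_cong) simp
    then have "mv Nm V (mv N1 (tr V) z) i = 0" by (simp add: mv_zero)
    then show ?thesis using that Ev[of i z] unfolding z_def by simp
  qed
  have trE: "tr E = E"
    unfolding E_def tr_def mmul_def Idm_def by (intro ext) (auto simp: mult.commute)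
  have Esym: "ip N1 (mv N1 E x) z = ip N1 x (mv N1 E z)" for x z
    using ip_adj[of N1 N1 E x z] by (simp add: trE)
  have Apv: "mv N1 (Ap (Suc j)) x = Aop (mv N1 (Ap j) x)" for j x
    unfolding ApS Aop_def by (simp add: mv_mmul)
  have Ap0v: "mv N1 (Ap 0) x i = x i" if "i < N1" for x i
    using that by (simp add: Ap0 mv_Idm)
  have Aop_cong: "Aop x = Aop x'" if "\<And>i. i < N1 \<Longrightarrow> x i = x' i" for x x'
    unfolding Aop_def using that by (metis mv_cong)
  have Aop_sym: "ip N1 (Aop x) z = ip N1 x (Aop z)" for x z
  proof -
    have "ip N1 (Aop x) z = ip N2 (mv N1 (tr M) x) (mv N1 (tr M) z)"
      unfolding Aop_def by (rule ip_adj)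
    also have "\<dots> = ip N1 x (Aop z)" unfolding Aop_def by (rule ip_adj2)
    finally show ?thesis .
  qed
  have comm: "\<forall>i<N1. mv N1 (Ap j) (Aop x) i = Aop (mv N1 (Ap j) x) i" for j x
  proof (induction j)
    case 0
    have "Aop (mv N1 (Ap 0) x) = Aop x" by (rule Aop_cong) (simp add: Ap0v)
    then show ?case by (simp add: Ap0v)
  next
    case (Suc j)
    have "mv N1 (Ap (Suc j)) (Aop x) = Aop (mv N1 (Ap j) (Aop x))" by (rule Apv)
    also have "\<dots> = Aop (Aop (mv N1 (Ap j) x))" by (rule Aop_cong) (use Suc.IH in simp)
    also have "\<dots> = Aop (mv N1 (Ap (Suc j)) x)" by (simp add: Apv)
    finally show ?case by simp
  qed
  have Apsym: "ip N1 (mv N1 (Ap j) x) z = ip N1 x (mv N1 (Ap j) z)" for j x z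
  proof (induction j arbitrary: x z)
    case 0
    show ?case by (rule ip_cong) (simp_all add: Ap0v)
  next
    case (Suc j)
    have "ip N1 (mv N1 (Ap (Suc j)) x) z = ip N1 (Aop (mv N1 (Ap j) x)) z" by (simp add: Apv)
    also have "\<dots> = ip N1 (mv N1 (Ap j) x) (Aop z)" by (rule Aop_sym)
    also have "\<dots> = ip N1 x (mv N1 (Ap j) (Aop z))" by (rule Suc.IH)
    also have "\<dots> = ip N1 x (Aop (mv N1 (Ap j) z))" by (rule ip_cong) (simp_all add: comm)
    also have "\<dots> = ip N1 x (mv N1 (Ap (Suc j)) z)" by (simp add: Apv)
    finally show ?case .
  qed
  show ?thesis
    unfolding kreal[symmetric] c0_def[symmetric]
  proof (rule snorm_least)
    fix y assume y: "ip N2 y y \<le> 1"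
    define w where "w = mv N2 (mmul N1 E M) y"
    have wE: "w = mv N1 E (mv N2 M y)" unfolding w_def by (simp add: mv_mmul)
    have Ew: "mv N1 E w i = w i" if "i < N1" for i
      unfolding wE using idem[OF that] .
    define ws where "ws = wseq N1 N2 M w"
    define dim where "dim = (\<lambda>j::nat. if even j then N1 else N2)"
    define mom where "mom = (\<lambda>j. ip (dim j) (ws j) (ws j))"
    define a where "a = ip N1 w w"
    have mom0: "mom 0 = a" by (simp add: mom_def dim_def ws_def a_def)
    have momnn: "0 \<le> mom j" for j unfolding mom_def by (rule ip_nonneg)
    have anny: "0 \<le> a" unfolding a_def by (rule ip_nonneg)
    have step: "mom (Suc j) = ip (dim j) (ws j) (ws (Suc (Suc j)))" for j
    proof (cases "even j")
      case True
      then show ?thesis unfolding mom_def dim_def ws_def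
        by (simp add: ip_adj2)
    next
      case False
      then show ?thesis unfolding mom_def dim_def ws_def
        by (simp add: ip_adj)
    qed
    have lc: "(mom (Suc j))\<^sup>2 \<le> mom j * mom (Suc (Suc j))" for j
    proof -
      have "(mom (Suc j))\<^sup>2 \<le> ip (dim j) (ws j) (ws j) * ip (dim j) (ws (Suc (Suc j))) (ws (Suc (Suc j)))"
        unfolding step by (rule ip_cs)
      moreover have "dim (Suc (Suc j)) = dim j" by (simp add: dim_def)
      ultimately show ?thesis by (simp add: mom_def)
    qed
    have LC: "mom 1 ^ k * a \<le> a ^ k * mom k"
      using logconv[of mom k, OF momnn lc] by (simp add: mom0)
    have mom1: "mom 1 = ip N2 (mv N1 (tr M) w) (mv N1 (tr M) w)"
      by (simp add: mom_def dim_def ws_def)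
    have "a = ip N1 (mv N1 E (mv N2 M y)) w" unfolding a_def using wE by simp
    also have "\<dots> = ip N1 (mv N2 M y) (mv N1 E w)" by (rule Esym)
    also have "\<dots> = ip N1 (mv N2 M y) w" by (rule ip_cong) (simp_all add: Ew)
    also have "\<dots> = ip N2 y (mv N1 (tr M) w)" by (rule ip_adj)
    also have "\<dots> \<le> sqrt (ip N2 y y) * sqrt (mom 1)" unfolding mom1 by (rule ip_cs2)
    also have "\<dots> \<le> 1 * sqrt (mom 1)"
      using y ip_nonneg[of N2 y] momnn[of 1] by (intro mult_right_mono) auto
    finally have "a \<le> sqrt (mom 1)" by simp
    then have a2: "a\<^sup>2 \<le> mom 1" using anny momnn[of 1]
      by (metis power_mono real_sqrt_pow2)
    have ws2: "\<forall>i<N1. ws (2*j) i = mv N1 (Ap j) w i" for j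
    proof (induction j)
      case 0
      then show ?case by (simp add: ws_def Ap0v)
    next
      case (Suc j)
      have "ws (2 * Suc j) = Aop (ws (2*j))"
        by (simp add: ws_def Aop_def)
      also have "\<dots> = Aop (mv N1 (Ap j) w)" by (rule Aop_cong) (use Suc.IH in simp)
      also have "\<dots> = mv N1 (Ap (Suc j)) w" by (simp add: Apv)
      finally show ?case by simp
    qed
    define u where "u = ws k"
    have u: "u = mv N1 (tr M) (ws (2*q))" unfolding u_def k_def ws_def by simp
    define Bq where "Bq = mmul N1 E (mmul N1 (Ap q) M)"
    have momk: "mom k = ip N2 u u" unfolding mom_def dim_def u_def k_def by simp
    have "mom k = ip N1 (ws (2*q)) (mv N2 M u)" unfolding momk by (subst (1) u) (rule ip_adj2)
    also have "\<dots> = ip N1 (mv N1 (Ap q) w) (mv N2 M u)" by (rule ip_cong) (simp_all add: ws2)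
    also have "\<dots> = ip N1 w (mv N1 (Ap q) (mv N2 M u))" by (rule Apsym)
    also have "\<dots> = ip N1 (mv N1 E w) (mv N1 (Ap q) (mv N2 M u))" by (rule ip_cong) (simp_all add: Ew)
    also have "\<dots> = ip N1 w (mv N1 E (mv N1 (Ap q) (mv N2 M u)))" by (rule Esym)
    also have "\<dots> = ip N1 w (mv N2 Bq u)" by (simp add: Bq_def mv_mmul)
    also have "\<dots> \<le> sqrt a * sqrt (ip N1 (mv N2 Bq u) (mv N2 Bq u))" unfolding a_def by (rule ip_cs2)
    also have "\<dots> \<le> sqrt a * (c0 * sqrt (mom k))"
      unfolding momk c0_def Bq_def using anny by (intro mult_left_mono snorm_scale) simp_all
    finally have mk: "mom k \<le> sqrt a * c0 * sqrt (mom k)" by (simp add: mult_ac)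
    have mk2: "mom k \<le> a * c0\<^sup>2"
    proof (cases "mom k = 0")
      case True
      then show ?thesis using anny by simp
    next
      case False
      then have pos: "0 < sqrt (mom k)" using momnn[of k] by simp
      have e: "sqrt (mom k) * sqrt (mom k) = mom k" using momnn[of k] by simp
      have "sqrt (mom k) * sqrt (mom k) \<le> (sqrt a * c0) * sqrt (mom k)"
        unfolding e by (rule mk)
      then have "sqrt (mom k) \<le> sqrt a * c0" using pos by (rule mult_right_le_imp_le)
      then have "(sqrt (mom k))\<^sup>2 \<le> (sqrt a * c0)\<^sup>2"
        using pos by (intro power_mono) auto
      then show ?thesis using momnn[of k] anny by (simp add: power_mult_distrib)
    qed
    show "sqrt (ip N1 (mv N2 (mmul N1 E M) y) (mv N2 (mmul N1 E M) y)) \<le> c0 powr (1 / real k)"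
      unfolding w_def[symmetric] a_def[symmetric]
    proof (cases "a = 0")
      case True
      then show "sqrt a \<le> c0 powr (1 / real k)" by simp
    next
      case False
      then have apos: "0 < a" using anny by simp
      have "(a\<^sup>2) ^ k * a \<le> mom 1 ^ k * a"
        using a2 apos anny by (intro mult_right_mono power_mono) auto
      also have "\<dots> \<le> a ^ k * mom k" by (rule LC)
      also have "\<dots> \<le> a ^ k * (a * c0\<^sup>2)" using mk2 apos by (intro mult_left_mono) auto
      finally have "a ^ k * (a ^ k * a) \<le> a ^ k * (a * c0\<^sup>2)"
        by (simp add: power_mult[symmetric] mult_2_right power_add mult_ac)
      then have "a ^ k * a \<le> a * c0\<^sup>2" using apos by simp
      then have ak: "a ^ k \<le> c0\<^sup>2" using apos by (simp add: mult.commute)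
      define s where "s = sqrt a"
      have spos: "0 < s" using apos unfolding s_def by simp
      have "(s ^ k)\<^sup>2 = a ^ k" unfolding s_def
        by (simp add: power_mult[symmetric] mult.commute[of k 2] power_mult anny)
      then have "(s ^ k)\<^sup>2 \<le> c0\<^sup>2" using ak by simp
      then have sk: "s ^ k \<le> c0" using c0nn by (rule power2_le_imp_le)
      have k0: "real k > 0" unfolding k_def by simp
      have "s = (s ^ k) powr (1 / real k)"
        using spos k0 by (simp add: powr_realpow[symmetric] powr_powr)
      also have "\<dots> \<le> c0 powr (1 / real k)"
        using sk spos k0 by (intro powr_mono2) auto
      finally show "sqrt a \<le> c0 powr (1 / real k)" unfolding s_def .
    qed
  qed
qed




theorem theorem1:
  fixes n1 n2 n3 s m q :: nat and X B Q R :: tensor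
  assumes "0 < n1" and "0 < n2" and "0 < n3" and "0 < s" and "0 < m"
  defines "XXt \<equiv> tprod n1 n2 n3 X (ttrans n3 X)"
  defines "K \<equiv> tcat s (\<lambda>j. tprod n1 n2 n3 (tprod n1 n1 n3 (tpow n1 n3 XXt j) X) B)"
  assumes QR: "teq n1 (s * (q + 1)) n3 K (tprod n1 m n3 Q R)"
      and orth: "teq m m n3 (tprod m n1 n3 (ttrans n3 Q) Q) (tid m)"
      and upper: "\<forall>k<n3. \<forall>i<m. \<forall>j<s * (q + 1). j < i \<longrightarrow> R i j k = 0"
  defines "P \<equiv> tprod n1 m n3 Q (ttrans n3 Q)"
  defines "Z \<equiv> tcat n2 (\<lambda>j. tprod n1 n1 n3 (tpow n1 n3 XXt j) X)"
  shows "tnorm n1 n2 n3 (tprod n1 n1 n3 (tsub (tid n1) (tprod n1 m n3 Q (ttrans n3 Q))) X)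
         \<le> tnorm n1 (n2 * (q + 1)) n3 (tprod n1 n1 n3 (tsub (tid n1) P) Z) powr (1 / (2 * q + 1))"
proof -
  note pos = assms(1-3,5)
  define M where "M = bcirc n1 n2 n3 X"
  define V where "V = bcirc n1 m n3 Q"
  define Eb where "Eb = bcirc n1 n1 n3 (tsub (tid n1) P)"
  define Ap where "Ap = (\<lambda>j. bcirc n1 n1 n3 (tpow n1 n3 XXt j))"
  define w where "w = n2 * (q + 1)"
  have hE: "Eb = (\<lambda>r c. Idm (n1*n3) r c - mmul (m*n3) V (tr V) r c)"
    unfolding Eb_def P_def V_def using pos
    by (simp add: bcirc_tsub bcirc_tid bcirc_tprod bcirc_ttrans)
  have horth: "mmul (n1*n3) (tr V) V = Idm (m*n3)"
    using bcirc_teq[OF orth] pos unfolding V_def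
    by (simp add: bcirc_tid bcirc_tprod bcirc_ttrans)
  have hAp0: "Ap 0 = Idm (n1*n3)" unfolding Ap_def using pos by (simp add: tpow_0 bcirc_tid)
  have hApS: "Ap (Suc j) = mmul (n1*n3) (mmul (n2*n3) M (tr M)) (Ap j)" for j
    unfolding Ap_def M_def XXt_def using pos by (simp add: tpow_Suc bcirc_tprod bcirc_ttrans)
  have main: "snorm (n1*n3) (n2*n3) (mmul (n1*n3) Eb M)
     \<le> snorm (n1*n3) (n2*n3) (mmul (n1*n3) Eb (mmul (n1*n3) (Ap q) M)) powr (1 / (2 * real q + 1))"
    by (rule main_matrix[OF horth hAp0 hApS hE])
  have lhs: "tnorm n1 n2 n3 (tprod n1 n1 n3 (tsub (tid n1) (tprod n1 m n3 Q (ttrans n3 Q))) X)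
      = snorm (n1*n3) (n2*n3) (mmul (n1*n3) Eb M)"
    unfolding tnorm_def P_def[symmetric] Eb_def M_def using pos by (simp add: bcirc_tprod)
  have rhs: "tnorm n1 (n2 * (q + 1)) n3 (tprod n1 n1 n3 (tsub (tid n1) P) Z)
      = snorm (n1*n3) (w*n3) (mmul (n1*n3) Eb (bcirc n1 w n3 Z))"
    unfolding tnorm_def Eb_def w_def using pos by (simp add: bcirc_tprod)
  define g where "g = (\<lambda>c. c div n2 * w + (q*n2 + c mod n2))"
  have jw: "q*n2 + c mod n2 < w" for c unfolding w_def using pos by (simp add: algebra_simps)
  have gm: "g c mod w = q*n2 + c mod n2" "g c div w = c div n2" for c
    unfolding g_def using jw[of c] by auto
  have inj: "inj_on g {..<n2*n3}"
  proof
    fix x y assume "x \<in> {..<n2*n3}" "y \<in> {..<n2*n3}" "g x = g y"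
    then have "x div n2 = y div n2" "x mod n2 = y mod n2" using gm[of x] gm[of y] by auto
    then show "x = y" by (metis div_mult_mod_eq)
  qed
  have rng: "g ` {..<n2*n3} \<subseteq> {..<w*n3}"
  proof
    fix c' assume "c' \<in> g ` {..<n2*n3}"
    then obtain c where c: "c < n2*n3" "c' = g c" by auto
    have b: "c div n2 < n3" using c by (simp add: less_mult_imp_div_less mult.commute)
    show "c' \<in> {..<w*n3}" using idx_lt[OF b jw[of c]] c unfolding g_def by simp
  qed
  have eq: "mmul (n1*n3) Eb (mmul (n1*n3) (Ap q) M) r c = mmul (n1*n3) Eb (bcirc n1 w n3 Z) r (g c)"
    if "r < n1*n3" "c < n2*n3" for r c
  proof -
    have "\<And>l. l < n1*n3 \<Longrightarrow> bcirc n1 w n3 Z l (g c) = mmul (n1*n3) (Ap q) M l c"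
    proof -
      fix l assume l: "l < n1*n3"
      have "bcirc n1 w n3 Z l (g c) = bcirc n1 n2 n3 (tprod n1 n1 n3 (tpow n1 n3 XXt q) X) l c"
        unfolding Z_def w_def g_def using bcirc_tcat[OF pos(2) l that(2)] by simp
      also have "\<dots> = mmul (n1*n3) (Ap q) M l c"
        unfolding Ap_def M_def using pos by (simp add: bcirc_tprod)
      finally show "bcirc n1 w n3 Z l (g c) = mmul (n1*n3) (Ap q) M l c" .
    qed
    then show ?thesis unfolding mmul_def[of "n1*n3" Eb] by (intro sum.cong) auto
  qed
  have cmp: "snorm (n1*n3) (n2*n3) (mmul (n1*n3) Eb (mmul (n1*n3) (Ap q) M))
      \<le> snorm (n1*n3) (w*n3) (mmul (n1*n3) Eb (bcirc n1 w n3 Z))"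
    by (rule snorm_cols[OF inj rng]) (rule eq)
  have "snorm (n1*n3) (n2*n3) (mmul (n1*n3) Eb (mmul (n1*n3) (Ap q) M)) powr (1 / (2 * real q + 1))
      \<le> snorm (n1*n3) (w*n3) (mmul (n1*n3) Eb (bcirc n1 w n3 Z)) powr (1 / (2 * real q + 1))"
    by (intro powr_mono2 cmp snorm_nonneg) simp
  then have fin: "snorm (n1*n3) (n2*n3) (mmul (n1*n3) Eb M)
      \<le> snorm (n1*n3) (w*n3) (mmul (n1*n3) Eb (bcirc n1 w n3 Z)) powr (1 / (2 * real q + 1))"
    by (rule order_trans[OF main])
  have wn: "w = n2 * (q + 1)" by (rule w_def)
  show ?thesis unfolding lhs rhs using fin by (simp add: wn add.commute)
qed


end
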